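(* In the setting described in the context, suppose $T$ is sufficiently large. Then for any $2\le t\le T$ and any pair $(x_t,x_{t-1})\in\mathbb{R}^d\times\mathbb{R}^d$, \[ \Big|\log\frac{p_{X_{t-1}|X_t}(x_{t-1}\mid x_t)}{p_{Y_{t-1}^\star|Y_t}(x_{t-1}\mid x_t)}\Big|\le T^{c_0+2c_R}\big(\|\sqrt{\alpha_t}x_{t-1}-x_t\|_2+\|x_t\|_2+1\big). \]
   Context: Let $d\ge1$, $T\ge2$. Learning rates: $\beta_1=T^{-c_0}$, $\beta_{t+1}=\frac{c_1\log T}{T}\min\{\beta_1(1+\frac{c_1\log T}{T})^t,1\}$ ($t=1,\dots,T-1$), with $c_0,c_1>0$ sufficiently large universal constants; $\alpha_t=1-\beta_t$, $\bar\alpha_t=\prod_{i\le t}\alpha_i$. Forward process: $X_0\sim p_{\mathsf{data}}$ on $\mathbb{R}^d$ whose support $\mathcal X$ satisfies $\sup_{x\in\mathcal X}\|x\|_2\le R:=T^{c_R}$ for a universal constant $c_R>0$; $X_t=\sqrt{\alpha_t}X_{t-1}+\sqrt{1-\alpha_t}W_t$, $W_t$ i.i.d. $\mathcal N(0,I_d)$ independent of $X_0$. $q_t$ is the density of $X_t$, $s_t^\star=\nabla\log q_t$, $p_{X_{t-1}|X_t}$ the conditional density of $X_{t-1}$ given $X_t$. $\eta_t^\star=1-\alpha_t$, $\sigma_t^{\star2}=\frac{(1-\alpha_t)(\alpha_t-\bar\alpha_t)}{1-\bar\alpha_t}$, and $p_{Y_{t-1}^\star|Y_t}(x_{t-1}\mid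 x_t)=(\frac{\alpha_t}{2\pi\sigma_t^{\star2}})^{d/2}\exp(-\frac{\|\sqrt{\alpha_t}x_{t-1}-x_t-\eta_t^\star s_t^\star(x_t)\|_2^2}{2\sigma_t^{\star2}})$. *)

theory Defs
  imports "HOL-Probability.Probability"
begin

text \<open>Points of R^d are represented as functions nat => real; only the
coordinates i < d are relevant.\<close>

definition vnorm :: "nat \<Rightarrow> (nat \<Rightarrow> real) \<Rightarrow> real" where
  "vnorm d x = sqrt (\<Sum>i<d. (x i)\<^sup>2)"

definition beta :: "real \<Rightarrow> real \<Rightarrow> nat \<Rightarrow> nat \<Rightarrow> real" where
  "beta c0 c1 T t =
     (if t \<le> 1 then real T powr (- c0)
      else (c1 * ln (real T) / real T) *
           min (real T powr (- c0) * (1 + c1 * ln (real T) / real T) ^ (t - 1)) 1)"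

definition alpha :: "real \<Rightarrow> real \<Rightarrow> nat \<Rightarrow> nat \<Rightarrow> real" where
  "alpha c0 c1 T t = 1 - beta c0 c1 T t"

definition alpha_bar :: "real \<Rightarrow> real \<Rightarrow> nat \<Rightarrow> nat \<Rightarrow> real" where
  "alpha_bar c0 c1 T t = (\<Prod>i\<in>{1..t}. alpha c0 c1 T i)"

definition gauss :: "nat \<Rightarrow> real \<Rightarrow> (nat \<Rightarrow> real) \<Rightarrow> real" where
  "gauss d v z = (2 * pi * v) powr (- real d / 2) * exp (- (vnorm d z)\<^sup>2 / (2 * v))"

text \<open>Density q_t of X_t = sqrt(abar_t) X_0 + sqrt(1 - abar_t) Z, X_0 ~ mu.\<close>
definition q :: "nat \<Rightarrow> (nat \<Rightarrow> real) measure \<Rightarrow> real \<Rightarrow> real \<Rightarrow> nat \<Rightarrow> nat \<Rightarrow> (nat \<Rightarrow> real) \<Rightarrow> real" where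
  "q d \<mu> c0 c1 T t x =
     (\<integral>y. gauss d (1 - alpha_bar c0 c1 T t) (\<lambda>i. x i - sqrt (alpha_bar c0 c1 T t) * y i) \<partial>\<mu>)"

definition score :: "nat \<Rightarrow> (nat \<Rightarrow> real) measure \<Rightarrow> real \<Rightarrow> real \<Rightarrow> nat \<Rightarrow> nat \<Rightarrow> (nat \<Rightarrow> real) \<Rightarrow> (nat \<Rightarrow> real)" where
  "score d \<mu> c0 c1 T t x =
     (\<lambda>i. if i < d then deriv (\<lambda>h. ln (q d \<mu> c0 c1 T t (x(i := x i + h)))) 0 else 0)"

text \<open>Conditional density of X_{t-1} given X_t (Bayes formula).\<close>
definition p_cond :: "nat \<Rightarrow> (nat \<Rightarrow> real) measure \<Rightarrow> real \<Rightarrow> real \<Rightarrow> nat \<Rightarrow> nat \<Rightarrow> (nat \<Rightarrow> real) \<Rightarrow> (nat \<Rightarrow> real) \<Rightarrow> real" where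
  "p_cond d \<mu> c0 c1 T t xp x =
     q d \<mu> c0 c1 T (t - 1) xp
     * gauss d (1 - alpha c0 c1 T t) (\<lambda>i. x i - sqrt (alpha c0 c1 T t) * xp i)
     / q d \<mu> c0 c1 T t x"

definition sigma_sq :: "real \<Rightarrow> real \<Rightarrow> nat \<Rightarrow> nat \<Rightarrow> real" where
  "sigma_sq c0 c1 T t =
     (1 - alpha c0 c1 T t) * (alpha c0 c1 T t - alpha_bar c0 c1 T t) / (1 - alpha_bar c0 c1 T t)"

text \<open>p_{Y*_{t-1}|Y_t}(xp | x), with eta*_t = 1 - alpha_t.\<close>
definition p_star :: "nat \<Rightarrow> (nat \<Rightarrow> real) measure \<Rightarrow> real \<Rightarrow> real \<Rightarrow> nat \<Rightarrow> nat \<Rightarrow> (nat \<Rightarrow> real) \<Rightarrow> (nat \<Rightarrow> real) \<Rightarrow> real" where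
  "p_star d \<mu> c0 c1 T t xp x =
     (alpha c0 c1 T t / (2 * pi * sigma_sq c0 c1 T t)) powr (real d / 2)
     * exp (- (vnorm d (\<lambda>i. sqrt (alpha c0 c1 T t) * xp i - x i
                  - (1 - alpha c0 c1 T t) * score d \<mu> c0 c1 T t x i))\<^sup>2
            / (2 * sigma_sq c0 c1 T t))"

end

theory Submission
  imports Defs
begin


lemma vnorm_L2: "vnorm d x = L2_set x {..<d}"
  by (simp add: vnorm_def L2_set_def)

lemma vnorm_sq: "(vnorm d x)\<^sup>2 = (\<Sum>i<d. (x i)\<^sup>2)"
  by (simp add: vnorm_def sum_nonneg)

lemma vnorm_nonneg: "0 \<le> vnorm d x" by (simp add: vnorm_def sum_nonneg)

lemma vnorm_triangle: "vnorm d (\<lambda>i. x i + y i) \<le> vnorm d x + vnorm d y"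
  unfolding vnorm_L2 by (rule L2_set_triangle_ineq)

lemma vnorm_cs: "\<bar>\<Sum>i<d. x i * y i\<bar> \<le> vnorm d x * vnorm d y"
proof -
  have "\<bar>\<Sum>i<d. x i * y i\<bar> \<le> (\<Sum>i<d. \<bar>x i\<bar> * \<bar>y i\<bar>)"
    by (metis (no_types, lifting) abs_mult sum.cong sum_abs)
  also have "\<dots> \<le> vnorm d x * vnorm d y" unfolding vnorm_L2 by (rule L2_set_mult_ineq)
  finally show ?thesis .
qed

lemma vnorm_scale: "vnorm d (\<lambda>i. c * x i) = \<bar>c\<bar> * vnorm d x"
  unfolding vnorm_def by (simp add: power_mult_distrib sum_distrib_left[symmetric] real_sqrt_mult)

definition gph :: "real \<Rightarrow> real \<Rightarrow> real" where "gph v s = exp (- s\<^sup>2 / (2 * v))"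
definition gph1 :: "real \<Rightarrow> real \<Rightarrow> real" where "gph1 v s = - s / v * gph v s"
definition gph2 :: "real \<Rightarrow> real \<Rightarrow> real" where "gph2 v s = (s\<^sup>2 / v\<^sup>2 - 1 / v) * gph v s"

lemma gph_deriv: "v > 0 \<Longrightarrow> (gph v has_real_derivative gph1 v s) (at s)"
  unfolding gph_def gph1_def
  by (auto intro!: derivative_eq_intros simp: field_simps power2_eq_square)

lemma gph1_deriv: "v > 0 \<Longrightarrow> (gph1 v has_real_derivative gph2 v s) (at s)"
  unfolding gph2_def gph1_def
  by (auto intro!: derivative_eq_intros gph_deriv simp: gph1_def field_simps power2_eq_square)

lemma gph2_bound: assumes "v > 0" shows "\<bar>gph2 v s\<bar> \<le> 3 / v"
proof -
  define u where "u = s\<^sup>2 / (2 * v)"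
  have u0: "u \<ge> 0" using assms by (simp add: u_def)
  have e: "exp u \<ge> 1 + u" by (rule exp_ge_add_one_self)
  have eu: "u * exp (-u) \<le> 1" using e u0 by (simp add: exp_minus field_simps, linarith)
  have ep: "exp (-u) \<le> 1" using u0 by simp
  have "gph2 v s = (2 * u / v - 1/v) * exp (-u)"
    using assms by (simp add: gph2_def gph_def u_def field_simps power2_eq_square)
  also have "\<bar>\<dots>\<bar> \<le> 2 * (u * exp (-u)) / v + exp (-u) / v"
    using assms u0 by (auto simp: abs_if field_simps)
  also have "\<dots> \<le> 2 / v + 1 / v"
    using assms eu ep by (intro add_mono divide_right_mono) auto
  finally show ?thesis by simp
qed

lemma gph1_lip: assumes "v > 0" shows "\<bar>gph1 v a - gph1 v b\<bar> \<le> 3 / v * \<bar>a - b\<bar>"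
  using field_differentiable_bound[of UNIV "gph1 v" "gph2 v" "3/v" a b] gph1_deriv[OF assms] gph2_bound[OF assms]
  by (auto simp: has_field_derivative_at_within)

lemma gph_taylor: assumes v: "v > 0"
  shows "\<bar>gph v (s + h) - gph v s - h * gph1 v s\<bar> \<le> 3 / v * h\<^sup>2"
proof -
  define g where "g r = gph v (s + r) - r * gph1 v s" for r
  have dg: "(g has_real_derivative (gph1 v (s + r) - gph1 v s)) (at r within S)" for r S
    unfolding g_def
    by (auto intro!: derivative_eq_intros DERIV_chain2[OF gph_deriv[OF v]] simp: has_field_derivative_at_within)
  have bd: "\<bar>gph1 v (s + r) - gph1 v s\<bar> \<le> 3 / v * \<bar>h\<bar>" if "r \<in> cball 0 \<bar>h\<bar>" for r
  proof -
    have "\<bar>gph1 v (s + r) - gph1 v s\<bar> \<le> 3 / v * \<bar>r\<bar>" using gph1_lip[OF v, of "s+r" s] by simp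
    also have "\<dots> \<le> 3 / v * \<bar>h\<bar>" using that v by (intro mult_left_mono) auto
    finally show ?thesis .
  qed
  have "norm (g h - g 0) \<le> 3 / v * \<bar>h\<bar> * norm (h - 0)"
    by (rule field_differentiable_bound[of "cball 0 \<bar>h\<bar>" g]) (use dg bd in auto)
  then show ?thesis by (simp add: g_def power2_eq_square mult.assoc)
qed


definition qq :: "nat \<Rightarrow> (nat \<Rightarrow> real) measure \<Rightarrow> real \<Rightarrow> real \<Rightarrow> (nat \<Rightarrow> real) \<Rightarrow> real" where
  "qq d \<mu> v c x = (\<integral>y. gauss d v (\<lambda>i. x i - c * y i) \<partial>\<mu>)"

lemma gauss_pos: "v > 0 \<Longrightarrow> gauss d v z > 0"
  by (simp add: gauss_def)

lemma gauss_le: "v > 0 \<Longrightarrow> gauss d v z \<le> (2 * pi * v) powr (- real d / 2)"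
  by (simp add: gauss_def)

lemma meas_gauss:
  assumes "sets \<mu> = sets (PiM {..<d} (\<lambda>_. borel))"
  shows "(\<lambda>y. gauss d v (\<lambda>i. x i - c * y i)) \<in> borel_measurable \<mu>"
proof -
  have "(\<lambda>y. gauss d v (\<lambda>i. x i - c * y i)) \<in> borel_measurable (PiM {..<d} (\<lambda>_. borel))"
    unfolding gauss_def vnorm_def by measurable
  then show ?thesis using measurable_cong_sets[OF assms refl] by blast
qed

lemma meas_coord:
  assumes "sets \<mu> = sets (PiM {..<d} (\<lambda>_. borel))" "i < d"
  shows "(\<lambda>y. y i) \<in> borel_measurable \<mu>"
proof -
  have "(\<lambda>y. y i) \<in> borel_measurable (PiM {..<d} (\<lambda>_. borel))"
    using assms(2) by (intro measurable_component_singleton) auto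
  then show ?thesis using measurable_cong_sets[OF assms(1) refl] by blast
qed

lemma integrable_gauss:
  assumes "prob_space \<mu>" "sets \<mu> = sets (PiM {..<d} (\<lambda>_. borel))" "v > 0"
  shows "integrable \<mu> (\<lambda>y. gauss d v (\<lambda>i. x i - c * y i))"
proof -
  interpret prob_space \<mu> by fact
  show ?thesis
    by (rule integrable_const_bound[where B="(2 * pi * v) powr (- real d / 2)"])
       (use meas_gauss[OF assms(2)] gauss_le[OF assms(3)] gauss_pos[OF assms(3)] in \<open>auto simp: less_imp_le\<close>)
qed

lemma qq_pos:
  assumes "prob_space \<mu>" "sets \<mu> = sets (PiM {..<d} (\<lambda>_. borel))" "v > 0"
  shows "qq d \<mu> v c x > 0"
proof -
  interpret prob_space \<mu> by fact
  have nn: "qq d \<mu> v c x \<ge> 0" unfolding qq_def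
    by (rule integral_nonneg_AE) (use gauss_pos[OF assms(3)] in \<open>auto simp: less_imp_le\<close>)
  have "qq d \<mu> v c x \<noteq> 0"
  proof
    assume "qq d \<mu> v c x = 0"
    then have "AE y in \<mu>. gauss d v (\<lambda>i. x i - c * y i) = 0"
      unfolding qq_def
      using integral_nonneg_eq_0_iff_AE[OF integrable_gauss[OF assms]] gauss_pos[OF assms(3)]
      by (auto simp: less_imp_le)
    moreover have ne: "\<And>z. gauss d v z \<noteq> 0" using gauss_pos[OF assms(3)] by (simp add: less_imp_neq[symmetric])
    ultimately have "AE y in \<mu>. False" by simp
    then show False by simp
  qed
  with nn show ?thesis by simp
qed



lemma meas_tr: "f \<in> borel_measurable (PiM {..<d} (\<lambda>_. borel)) \<Longrightarrow> sets \<mu> = sets (PiM {..<d} (\<lambda>_. borel)) \<Longrightarrow> f \<in> borel_measurable \<mu>"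
  using measurable_cong_sets[of \<mu> "PiM {..<d} (\<lambda>_. borel)" borel borel] by blast

lemma gph1_bound: assumes "v > 0" shows "\<bar>gph1 v s\<bar> \<le> (1 + 2 * v) / v"
proof -
  define u where "u = s\<^sup>2 / (2 * v)"
  have u0: "u \<ge> 0" using assms by (simp add: u_def)
  have e: "exp u \<ge> 1 + u" by (rule exp_ge_add_one_self)
  have eu: "u * exp (-u) \<le> 1" using e u0 by (simp add: exp_minus field_simps, linarith)
  have ep: "exp (-u) \<le> 1" using u0 by simp
  have s1: "\<bar>s\<bar> \<le> 1 + s\<^sup>2"
  proof (cases "\<bar>s\<bar> \<le> 1")
    case True
    have "0 \<le> s\<^sup>2" by simp
    then show ?thesis using True by linarith
  next
    case False
    have "\<bar>s\<bar> * 1 \<le> \<bar>s\<bar> * \<bar>s\<bar>" by (rule mult_left_mono) (use False in auto)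
    moreover have "\<bar>s\<bar> * \<bar>s\<bar> = s\<^sup>2" by (simp add: power2_eq_square)
    ultimately show ?thesis by linarith
  qed
  have "\<bar>s\<bar> * exp (-u) \<le> (1 + s\<^sup>2) * exp (-u)" using s1 by (intro mult_right_mono) auto
  also have "\<dots> = exp (-u) + 2 * v * (u * exp (-u))" using assms by (simp add: u_def field_simps)
  also have "\<dots> \<le> 1 + 2 * v * 1" using ep eu assms by (intro add_mono mult_left_mono) auto
  finally have "\<bar>s\<bar> * exp (-u) \<le> 1 + 2 * v" by simp
  then show ?thesis using assms
    by (simp add: gph1_def gph_def u_def abs_mult field_simps)
qed

definition Kf :: "nat \<Rightarrow> real \<Rightarrow> real \<Rightarrow> (nat \<Rightarrow> real) \<Rightarrow> nat \<Rightarrow> (nat \<Rightarrow> real) \<Rightarrow> real" where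
  "Kf d v c x i y = gauss d v (\<lambda>j. x j - c * y j) * exp ((x i - c * y i)\<^sup>2 / (2 * v))"

lemma gauss_upd:
  assumes v: "v > 0" and "i < d"
  shows "gauss d v (\<lambda>j. (x(i := x i + h)) j - c * y j) = Kf d v c x i y * gph v (x i - c * y i + h)"
proof -
  define S where "S = (\<Sum>j\<in>{..<d} - {i}. (x j - c * y j)\<^sup>2)"
  have i: "i \<in> {..<d}" using assms by simp
  have e1: "(vnorm d (\<lambda>j. (x(i := x i + h)) j - c * y j))\<^sup>2 = (x i - c * y i + h)\<^sup>2 + S"
    unfolding vnorm_sq S_def by (subst sum.remove[OF _ i]) (auto intro!: sum.cong simp: algebra_simps)
  have e2: "(vnorm d (\<lambda>j. x j - c * y j))\<^sup>2 = (x i - c * y i)\<^sup>2 + S"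
    unfolding vnorm_sq S_def by (subst sum.remove[OF _ i]) auto
  show ?thesis
    unfolding Kf_def gauss_def gph_def e1 e2 mult.assoc exp_add[symmetric]
    using v by (simp add: field_simps)
qed

lemma Kf_bound: "v > 0 \<Longrightarrow> i < d \<Longrightarrow> 0 < Kf d v c x i y \<and> Kf d v c x i y \<le> (2 * pi * v) powr (- real d / 2)"
proof -
  assume v: "v > 0" and i: "i < d"
  define S where "S = (\<Sum>j\<in>{..<d} - {i}. (x j - c * y j)\<^sup>2)"
  have S0: "S \<ge> 0" unfolding S_def by (auto intro: sum_nonneg)
  have i': "i \<in> {..<d}" using i by simp
  have e2: "(vnorm d (\<lambda>j. x j - c * y j))\<^sup>2 = (x i - c * y i)\<^sup>2 + S"
    unfolding vnorm_sq S_def by (subst sum.remove[OF _ i']) auto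
  have "Kf d v c x i y = (2 * pi * v) powr (- real d / 2) * exp (- S / (2 * v))"
    unfolding Kf_def gauss_def e2 mult.assoc exp_add[symmetric] using v by (simp add: field_simps)
  moreover have "exp (- S / (2 * v)) \<le> 1" using S0 v by simp
  ultimately show ?thesis using v by (simp add: mult_left_le)
qed

lemma Kf_gph1: "v > 0 \<Longrightarrow> Kf d v c x i y * gph1 v (x i - c * y i) = gauss d v (\<lambda>j. x j - c * y j) * (- (x i - c * y i) / v)"
  unfolding Kf_def gph1_def gph_def by (simp add: field_simps flip: exp_add)

lemma meas_Kgph:
  assumes "sets \<mu> = sets (PiM {..<d} (\<lambda>_. borel))" "i < d"
  shows "(\<lambda>y. Kf d v c x i y * gph v (x i - c * y i + h)) \<in> borel_measurable \<mu>"
        "(\<lambda>y. Kf d v c x i y * gph1 v (x i - c * y i)) \<in> borel_measurable \<mu>"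
proof -
  have i: "i \<in> {..<d}" using assms by simp
  show "(\<lambda>y. Kf d v c x i y * gph v (x i - c * y i + h)) \<in> borel_measurable \<mu>"
    by (rule meas_tr[OF _ assms(1)]) (unfold Kf_def gauss_def vnorm_def gph_def, use i in measurable)
  show "(\<lambda>y. Kf d v c x i y * gph1 v (x i - c * y i)) \<in> borel_measurable \<mu>"
    by (rule meas_tr[OF _ assms(1)]) (unfold Kf_def gauss_def vnorm_def gph1_def gph_def, use i in measurable)
qed



lemma sq_div_abs: "(h::real) \<noteq> 0 \<Longrightarrow> c * h\<^sup>2 / \<bar>h\<bar> = c * \<bar>h\<bar>"
  by (cases "h > 0") (auto simp: power2_eq_square field_simps)

lemma qq_deriv:
  assumes P: "prob_space \<mu>" and sets: "sets \<mu> = sets (PiM {..<d} (\<lambda>_. borel))" and v: "v > 0" and i: "i < d"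
  shows "((\<lambda>h. qq d \<mu> v c (x(i := x i + h))) has_real_derivative
           (\<integral>y. gauss d v (\<lambda>j. x j - c * y j) * (- (x i - c * y i) / v) \<partial>\<mu>)) (at 0)"
proof -
  interpret prob_space \<mu> by fact
  define B where "B = (2 * pi * v) powr (- real d / 2)"
  define F where "F h y = Kf d v c x i y * gph v (x i - c * y i + h)" for h y
  define G where "G y = Kf d v c x i y * gph1 v (x i - c * y i)" for y
  define Q where "Q h = qq d \<mu> v c (x(i := x i + h))" for h
  define D where "D = (\<integral>y. G y \<partial>\<mu>)"
  have Kb: "0 < Kf d v c x i y" "Kf d v c x i y \<le> B" for y using Kf_bound[OF v i] B_def by auto
  have intF: "integrable \<mu> (F h)" for h
  proof (rule integrable_const_bound[where B=B])
    show "AE y in \<mu>. norm (F h y) \<le> B"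
    proof (rule AE_I2)
      fix y
      have "gph v (x i - c * y i + h) \<le> 1" "gph v (x i - c * y i + h) \<ge> 0" using v by (auto simp: gph_def)
      then show "norm (F h y) \<le> B" using Kb[of y] unfolding F_def
        by (simp add: abs_mult) (metis abs_of_pos mult_le_one mult.commute mult_left_le order_trans less_imp_le mult_right_le_one_le)
    qed
    show "F h \<in> borel_measurable \<mu>" unfolding F_def by (rule meas_Kgph[OF sets i])
  qed
  have intG: "integrable \<mu> G"
  proof (rule integrable_const_bound[where B="B * ((1 + 2 * v) / v)"])
    show "AE y in \<mu>. norm (G y) \<le> B * ((1 + 2 * v) / v)"
    proof (rule AE_I2)
      fix y
      have "\<bar>Kf d v c x i y\<bar> * \<bar>gph1 v (x i - c * y i)\<bar> \<le> B * ((1 + 2 * v) / v)"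
        by (rule mult_mono) (use Kb[of y] gph1_bound[OF v, of "x i - c * y i"] in auto)
      then show "norm (G y) \<le> B * ((1 + 2 * v) / v)" unfolding G_def by (simp add: abs_mult)
    qed
    show "G \<in> borel_measurable \<mu>" unfolding G_def by (rule meas_Kgph[OF sets i])
  qed
  have QF: "Q h = (\<integral>y. F h y \<partial>\<mu>)" for h
    unfolding Q_def qq_def F_def by (simp only: gauss_upd[OF v i])
  have DG: "(\<integral>y. gauss d v (\<lambda>j. x j - c * y j) * (- (x i - c * y i) / v) \<partial>\<mu>) = D"
    unfolding D_def G_def by (simp add: Kf_gph1[OF v])
  have bound: "\<bar>Q h - Q 0 - h * D\<bar> \<le> B * (3 / v) * h\<^sup>2" for h
  proof -
    have "Q h - Q 0 - h * D = (\<integral>y. F h y - F 0 y - h * G y \<partial>\<mu>)"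
      unfolding QF D_def using intF intG by simp
    also have "\<bar>\<dots>\<bar> \<le> (\<integral>y. \<bar>F h y - F 0 y - h * G y\<bar> \<partial>\<mu>)"
      using integral_norm_bound[of \<mu> "\<lambda>y. F h y - F 0 y - h * G y"] by simp
    also have "\<dots> \<le> (\<integral>y. B * (3 / v) * h\<^sup>2 \<partial>\<mu>)"
    proof (rule integral_mono)
      show "integrable \<mu> (\<lambda>y. \<bar>F h y - F 0 y - h * G y\<bar>)" using intF intG by auto
      show "integrable \<mu> (\<lambda>y. B * (3 / v) * h\<^sup>2)" by simp
      fix y
      have "F h y - F 0 y - h * G y = Kf d v c x i y * (gph v (x i - c * y i + h) - gph v (x i - c * y i) - h * gph1 v (x i - c * y i))"
        unfolding F_def G_def by (simp add: algebra_simps)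
      also have "\<bar>\<dots>\<bar> \<le> B * (3 / v * h\<^sup>2)"
        unfolding abs_mult using Kb[of y] gph_taylor[OF v, of "x i - c * y i" h]
        by (intro mult_mono) auto
      finally show "\<bar>F h y - F 0 y - h * G y\<bar> \<le> B * (3 / v) * h\<^sup>2" by simp
    qed
    also have "\<dots> = B * (3 / v) * h\<^sup>2" by (simp add: prob_space)
    finally show ?thesis .
  qed
  have pt: "norm ((Q h - Q 0) / h - D) \<le> B * (3 / v) * \<bar>h\<bar>" if h: "h \<noteq> 0" for h
  proof -
      have "(Q h - Q 0) / h - D = (Q h - Q 0 - h * D) / h" using h by (simp add: field_simps)
      then have "\<bar>(Q h - Q 0) / h - D\<bar> = \<bar>Q h - Q 0 - h * D\<bar> / \<bar>h\<bar>" by simp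
      also have "\<dots> \<le> B * (3 / v) * h\<^sup>2 / \<bar>h\<bar>" using bound[of h] h by (intro divide_right_mono) auto
      also have "\<dots> = B * (3 / v) * \<bar>h\<bar>" using h by (rule sq_div_abs)
      finally show ?thesis by simp
  qed
  have "((\<lambda>h. (Q h - Q 0) / h - D) \<longlongrightarrow> 0) (at 0)"
  proof (rule Lim_null_comparison)
    show "\<forall>\<^sub>F h in at 0. norm ((Q h - Q 0) / h - D) \<le> B * (3 / v) * \<bar>h\<bar>"
      unfolding eventually_at_filter by (rule always_eventually) (use pt in blast)
    show "((\<lambda>h. B * (3 / v) * \<bar>h\<bar>) \<longlongrightarrow> 0) (at 0)"
      by (rule tendsto_eq_intros refl tendsto_ident_at)+ simp
  qed
  then have "((\<lambda>h. (Q h - Q 0) / (h - 0)) \<longlongrightarrow> D) (at 0)"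
    by (simp add: LIM_zero_iff)
  then have "(Q has_real_derivative D) (at 0)" by (simp add: has_field_derivative_iff)
  then show ?thesis unfolding Q_def DG .
qed



lemma score_eq:
  assumes P: "prob_space \<mu>" and sets: "sets \<mu> = sets (PiM {..<d} (\<lambda>_. borel))" and v: "v > 0" and i: "i < d"
  shows "deriv (\<lambda>h. ln (qq d \<mu> v c (x(i := x i + h)))) 0 =
          (\<integral>y. gauss d v (\<lambda>j. x j - c * y j) * (- (x i - c * y i) / v) \<partial>\<mu>) / qq d \<mu> v c x"
proof -
  have pos: "qq d \<mu> v c (x(i := x i + 0)) > 0" using qq_pos[OF P sets v] by simp
  have "((\<lambda>h. ln (qq d \<mu> v c (x(i := x i + h)))) has_real_derivative
          inverse (qq d \<mu> v c (x(i := x i + 0))) * (\<integral>y. gauss d v (\<lambda>j. x j - c * y j) * (- (x i - c * y i) / v) \<partial>\<mu>)) (at 0)"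
    by (rule DERIV_chain2[OF DERIV_ln[OF pos] qq_deriv[OF P sets v i]])
  from DERIV_imp_deriv[OF this] show ?thesis by (simp add: field_simps)
qed

lemma poly_id:
  fixes sa sr x p y :: real
  shows "(1 - sa\<^sup>2) * (1 - sa\<^sup>2 * sr\<^sup>2) * (p - sr * y)\<^sup>2 + (1 - sr\<^sup>2) * (1 - sa\<^sup>2 * sr\<^sup>2) * (x - sa * p)\<^sup>2
       = (1 - sa\<^sup>2) * (1 - sr\<^sup>2) * (x - sa * sr * y)\<^sup>2 + ((1 - sa\<^sup>2 * sr\<^sup>2) * p - sa * (1 - sr\<^sup>2) * x - sr * (1 - sa\<^sup>2) * y)\<^sup>2"
  by algebra

lemma scalar_id_abs:
  fixes b v1 v0 A B C Q p m :: real
  assumes "b \<noteq> 0" "v1 \<noteq> 0" "v0 \<noteq> 0"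
    and pid: "b * v0 * A + v1 * v0 * B = b * v1 * C + Q\<^sup>2"
    and m: "p - m = Q / v0"
  shows "A / v1 + B / b = C / v0 + (p - m)\<^sup>2 / (b * v1 / v0)"
proof -
  have "A / v1 + B / b = (b * v0 * A + v1 * v0 * B) / (b * v1 * v0)" using assms(1-3) by (simp add: field_simps)
  also have "\<dots> = (b * v1 * C + Q\<^sup>2) / (b * v1 * v0)" by (simp add: pid)
  also have "\<dots> = C / v0 + (p - m)\<^sup>2 / (b * v1 / v0)" unfolding m using assms(1-3)
    by (simp add: field_simps power2_eq_square)
  finally show ?thesis .
qed

lemma sub_div: "(v::real) \<noteq> 0 \<Longrightarrow> p - (A + B) / v = (v * p - A - B) / v"
  by (simp add: field_simps)

lemma scalar_id:
  fixes sa sr x p y :: real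
  assumes "0 < sa" "sa < 1" "0 < sr" "sr < 1"
  shows "(p - sr * y)\<^sup>2 / (1 - sr\<^sup>2) + (x - sa * p)\<^sup>2 / (1 - sa\<^sup>2)
       = (x - sa * sr * y)\<^sup>2 / (1 - sa\<^sup>2 * sr\<^sup>2)
         + (p - (sa * (1 - sr\<^sup>2) * x + sr * (1 - sa\<^sup>2) * y) / (1 - sa\<^sup>2 * sr\<^sup>2))\<^sup>2
           / ((1 - sa\<^sup>2) * (1 - sr\<^sup>2) / (1 - sa\<^sup>2 * sr\<^sup>2))"
proof -
  have "sr * sr < 1 * 1" by (rule mult_strict_mono) (use assms in auto)
  moreover have "sa * sa < 1 * 1" by (rule mult_strict_mono) (use assms in auto)
  ultimately have h1: "1 - sr\<^sup>2 \<noteq> 0" "1 - sa\<^sup>2 \<noteq> 0" "sr\<^sup>2 < 1" "sa\<^sup>2 < 1" by (auto simp: power2_eq_square)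
  have "sa\<^sup>2 * sr\<^sup>2 < 1 * 1" by (rule mult_strict_mono) (use h1 assms in auto)
  then have h2: "1 - sa\<^sup>2 * sr\<^sup>2 \<noteq> 0" by simp
  have pid: "(1 - sa\<^sup>2) * (1 - sa\<^sup>2 * sr\<^sup>2) * (p - sr * y)\<^sup>2 + (1 - sr\<^sup>2) * (1 - sa\<^sup>2 * sr\<^sup>2) * (x - sa * p)\<^sup>2
       = (1 - sa\<^sup>2) * (1 - sr\<^sup>2) * (x - sa * sr * y)\<^sup>2 + ((1 - sa\<^sup>2 * sr\<^sup>2) * p - sa * (1 - sr\<^sup>2) * x - sr * (1 - sa\<^sup>2) * y)\<^sup>2"
    by (rule poly_id)
  have m: "p - (sa * (1 - sr\<^sup>2) * x + sr * (1 - sa\<^sup>2) * y) / (1 - sa\<^sup>2 * sr\<^sup>2)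
     = ((1 - sa\<^sup>2 * sr\<^sup>2) * p - sa * (1 - sr\<^sup>2) * x - sr * (1 - sa\<^sup>2) * y) / (1 - sa\<^sup>2 * sr\<^sup>2)"
    using sub_div[OF h2] .
  show ?thesis
    by (rule scalar_id_abs[OF h1(2) h1(1) h2 pid m])
qed



lemma sq_lt1: "0 < s \<Longrightarrow> s < (1::real) \<Longrightarrow> s\<^sup>2 < 1 \<and> 0 < s\<^sup>2"
proof -
  assume "0 < s" "s < 1"
  moreover have "s * s < 1 * 1" by (rule mult_strict_mono) (use calculation in auto)
  ultimately show ?thesis by (simp add: power2_eq_square)
qed

lemma gauss_prod:
  fixes sa sr :: real
  assumes sa: "0 < sa" "sa < 1" and sr: "0 < sr" "sr < 1"
  defines "V \<equiv> (1 - sa\<^sup>2) * (1 - sr\<^sup>2) / (1 - sa\<^sup>2 * sr\<^sup>2)"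
  shows "gauss d (1 - sr\<^sup>2) (\<lambda>i. p i - sr * y i) * gauss d (1 - sa\<^sup>2) (\<lambda>i. x i - sa * p i)
       = gauss d (1 - sa\<^sup>2 * sr\<^sup>2) (\<lambda>i. x i - sa * sr * y i) *
         gauss d V (\<lambda>i. p i - (sa * (1 - sr\<^sup>2) * x i + sr * (1 - sa\<^sup>2) * y i) / (1 - sa\<^sup>2 * sr\<^sup>2))"
proof -
  define v1 where "v1 = 1 - sr\<^sup>2"
  define b where "b = 1 - sa\<^sup>2"
  define v0 where "v0 = 1 - sa\<^sup>2 * sr\<^sup>2"
  have pv1: "v1 > 0" using sq_lt1[OF sr] by (simp add: v1_def)
  have pb: "b > 0" using sq_lt1[OF sa] by (simp add: b_def)
  have "sa\<^sup>2 * sr\<^sup>2 < 1 * 1" by (rule mult_strict_mono) (use sq_lt1[OF sa] sq_lt1[OF sr] in auto)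
  then have pv0: "v0 > 0" by (simp add: v0_def)
  have pV: "V > 0" using pv1 pb pv0 by (simp add: V_def v1_def[symmetric] b_def[symmetric] v0_def[symmetric])
  have VV: "V = b * v1 / v0" by (simp add: V_def v1_def b_def v0_def)
  define e where "e = - real d / 2"
  have cst: "(2 * pi * v1) powr e * (2 * pi * b) powr e = (2 * pi * v0) powr e * (2 * pi * V) powr e"
  proof -
    have "(2 * pi * v1) powr e * (2 * pi * b) powr e = (2 * pi * v1 * (2 * pi * b)) powr e"
      using powr_mult[of "2 * pi * v1" "2 * pi * b" e] pv1 pb by simp
    also have "2 * pi * v1 * (2 * pi * b) = 2 * pi * v0 * (2 * pi * V)" using pv0 by (simp add: VV field_simps)
    also have "(2 * pi * v0 * (2 * pi * V)) powr e = (2 * pi * v0) powr e * (2 * pi * V) powr e"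
      using powr_mult[of "2 * pi * v0" "2 * pi * V" e] pv0 pV by simp
    finally show ?thesis .
  qed
  have ex: "(vnorm d (\<lambda>i. p i - sr * y i))\<^sup>2 / v1 + (vnorm d (\<lambda>i. x i - sa * p i))\<^sup>2 / b
      = (vnorm d (\<lambda>i. x i - sa * sr * y i))\<^sup>2 / v0 +
        (vnorm d (\<lambda>i. p i - (sa * (1 - sr\<^sup>2) * x i + sr * (1 - sa\<^sup>2) * y i) / (1 - sa\<^sup>2 * sr\<^sup>2)))\<^sup>2 / V"
    unfolding vnorm_sq sum_divide_distrib sum.distrib[symmetric] v1_def b_def v0_def V_def
    by (rule sum.cong[OF refl], rule scalar_id[OF sa sr])
  have "exp (- (vnorm d (\<lambda>i. p i - sr * y i))\<^sup>2 / (2 * v1)) * exp (- (vnorm d (\<lambda>i. x i - sa * p i))\<^sup>2 / (2 * b))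
      = exp (- ((vnorm d (\<lambda>i. p i - sr * y i))\<^sup>2 / v1 + (vnorm d (\<lambda>i. x i - sa * p i))\<^sup>2 / b) / 2)"
    unfolding exp_add[symmetric] using pv1 pb by (simp add: add_divide_distrib diff_divide_distrib)
  also have "\<dots> = exp (- (vnorm d (\<lambda>i. x i - sa * sr * y i))\<^sup>2 / (2 * v0)) *
       exp (- (vnorm d (\<lambda>i. p i - (sa * (1 - sr\<^sup>2) * x i + sr * (1 - sa\<^sup>2) * y i) / (1 - sa\<^sup>2 * sr\<^sup>2)))\<^sup>2 / (2 * V))"
    unfolding ex exp_add[symmetric] using pv0 pV by (simp add: add_divide_distrib diff_divide_distrib)
  finally have ee: "exp (- (vnorm d (\<lambda>i. p i - sr * y i))\<^sup>2 / (2 * v1)) * exp (- (vnorm d (\<lambda>i. x i - sa * p i))\<^sup>2 / (2 * b)) =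
       exp (- (vnorm d (\<lambda>i. x i - sa * sr * y i))\<^sup>2 / (2 * v0)) *
       exp (- (vnorm d (\<lambda>i. p i - (sa * (1 - sr\<^sup>2) * x i + sr * (1 - sa\<^sup>2) * y i) / (1 - sa\<^sup>2 * sr\<^sup>2)))\<^sup>2 / (2 * V))" .
  have "gauss d (1 - sr\<^sup>2) (\<lambda>i. p i - sr * y i) * gauss d (1 - sa\<^sup>2) (\<lambda>i. x i - sa * p i)
     = ((2 * pi * v1) powr e * (2 * pi * b) powr e) *
       (exp (- (vnorm d (\<lambda>i. p i - sr * y i))\<^sup>2 / (2 * v1)) * exp (- (vnorm d (\<lambda>i. x i - sa * p i))\<^sup>2 / (2 * b)))"
    unfolding gauss_def v1_def[symmetric] b_def[symmetric] e_def[symmetric] by (simp only: ac_simps)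
  also have "\<dots> = ((2 * pi * v0) powr e * (2 * pi * V) powr e) *
       (exp (- (vnorm d (\<lambda>i. x i - sa * sr * y i))\<^sup>2 / (2 * v0)) *
       exp (- (vnorm d (\<lambda>i. p i - (sa * (1 - sr\<^sup>2) * x i + sr * (1 - sa\<^sup>2) * y i) / (1 - sa\<^sup>2 * sr\<^sup>2)))\<^sup>2 / (2 * V)))"
    unfolding cst ee ..
  also have "\<dots> = gauss d (1 - sa\<^sup>2 * sr\<^sup>2) (\<lambda>i. x i - sa * sr * y i) *
         gauss d V (\<lambda>i. p i - (sa * (1 - sr\<^sup>2) * x i + sr * (1 - sa\<^sup>2) * y i) / (1 - sa\<^sup>2 * sr\<^sup>2))"
    unfolding gauss_def v0_def[symmetric] e_def[symmetric] by (simp only: ac_simps)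
  finally show ?thesis .
qed



lemma vnorm_cong: "(\<And>i. i < d \<Longrightarrow> f i = g i) \<Longrightarrow> vnorm d f = vnorm d g"
  unfolding vnorm_def by (metis (mono_tags, lifting) lessThan_iff sum.cong)

lemma coord_le_vnorm: assumes i: "i < d" shows "\<bar>y i\<bar> \<le> vnorm d y"
proof -
  have "(y i)\<^sup>2 \<le> (\<Sum>j<d. (y j)\<^sup>2)" by (rule member_le_sum) (use i in auto)
  then have "sqrt ((y i)\<^sup>2) \<le> vnorm d y" unfolding vnorm_def by (rule real_sqrt_le_mono)
  then show ?thesis by simp
qed

lemma vnorm_diff: "vnorm d (\<lambda>i. x i - y i) \<le> vnorm d x + vnorm d y"
proof -
  have "vnorm d (\<lambda>i. x i + (-1) * y i) \<le> vnorm d x + vnorm d (\<lambda>i. (-1) * y i)" by (rule vnorm_triangle)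
  then show ?thesis by (simp only: vnorm_scale) simp
qed

lemma vnorm_rev: "vnorm d x \<le> vnorm d (\<lambda>i. x i - y i) + vnorm d y"
  using vnorm_triangle[of d "\<lambda>i. x i - y i" y] by simp



lemma lin_helper: "((p::real) + qc * u) / v - (p + qc * u') / v = qc / v * (u - u')"
  by (simp add: diff_divide_distrib[symmetric] algebra_simps)

lemma main_generic:
  fixes a r ab sig R Tc del :: real and x xp sc :: "nat \<Rightarrow> real"
  assumes P: "prob_space \<mu>" and sets: "sets \<mu> = sets (PiM {..<d} (\<lambda>_. borel))"
    and supp: "AE y in \<mu>. vnorm d y \<le> R"
    and a1: "4/9 \<le> a" and a2: "a < 1" and r1: "0 < r" and r2: "r < 1"
    and ab: "ab = a * r" and sig: "sig = (1 - a) * (a - ab) / (1 - ab)"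
    and R3: "3 \<le> R" and Tc: "1 / (1 - r) \<le> Tc" and del1: "(1 - a) / (1 - r) \<le> del" and del2: "del \<le> 1/5"
    and sc: "\<And>i. i < d \<Longrightarrow> sc i = deriv (\<lambda>h. ln (qq d \<mu> (1 - ab) (sqrt ab) (x(i := x i + h)))) 0"
  shows "\<bar>ln (qq d \<mu> (1 - r) (sqrt r) xp * gauss d (1 - a) (\<lambda>i. x i - sqrt a * xp i) / qq d \<mu> (1 - ab) (sqrt ab) x
           / ((a / (2 * pi * sig)) powr (real d / 2) *
              exp (- (vnorm d (\<lambda>i. sqrt a * xp i - x i - (1 - a) * sc i))\<^sup>2 / (2 * sig))))\<bar>
         \<le> Tc * R\<^sup>2 * (vnorm d (\<lambda>i. sqrt a * xp i - x i) + vnorm d x + 1)"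
proof -
  interpret prob_space \<mu> by fact
  define sa where "sa = sqrt a"
  define sr where "sr = sqrt r"
  have a0: "0 < a" using a1 by simp
  have sa1: "0 < sa" "sa < 1" using a0 a2 by (auto simp: sa_def)
  have sr1: "0 < sr" "sr < 1" using r1 r2 by (auto simp: sr_def)
  have asq: "a = sa\<^sup>2" using a0 by (simp add: sa_def)
  have rsq: "r = sr\<^sup>2" using r1 by (simp add: sr_def)
  have sab: "sqrt ab = sa * sr" by (simp add: ab sa_def sr_def real_sqrt_mult)
  have sa23: "2/3 \<le> sa"
  proof -
    have "sqrt (4/9) \<le> sa" unfolding sa_def using a1 by (rule real_sqrt_le_mono)
    moreover have "sqrt (4/9) = (2/3::real)" by (rule real_sqrt_unique) (auto simp: power2_eq_square)
    ultimately show ?thesis by simp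
  qed
  define b where "b = 1 - a"
  define v1 where "v1 = 1 - r"
  define v0 where "v0 = 1 - ab"
  define V where "V = b * v1 / v0"
  have b0: "0 < b" using a2 by (simp add: b_def)
  have v10: "0 < v1" using r2 by (simp add: v1_def)
  have "a * r < 1 * 1" using a0 a2 r1 r2 by (intro mult_strict_mono) auto
  then have v00: "0 < v0" by (simp add: v0_def ab)
  have "a * r \<le> 1 * r" using a2 r1 by (intro mult_right_mono) auto
  then have v01: "v1 \<le> v0" by (simp add: v0_def v1_def ab)
  have V0: "0 < V" using b0 v10 v00 by (simp add: V_def)
  have sigV: "sig = a * V" using v00 by (simp add: sig V_def b_def v1_def v0_def ab field_simps)
  have bsq: "b = 1 - sa\<^sup>2" by (simp add: b_def asq)
  have v1sq: "v1 = 1 - sr\<^sup>2" by (simp add: v1_def rsq)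
  have v0sq: "v0 = 1 - sa\<^sup>2 * sr\<^sup>2" by (simp add: v0_def ab asq rsq)
  have V': "V = (1 - sa\<^sup>2) * (1 - sr\<^sup>2) / (1 - sa\<^sup>2 * sr\<^sup>2)" by (simp add: V_def bsq v1sq v0sq)
  have del0: "0 \<le> del" using del1 b0 v10 by (smt (verit) b_def v1_def divide_pos_pos)
  have bv0: "b / v0 \<le> del"
  proof -
    have "b / v0 \<le> b / v1" using b0 v10 v01 by (intro divide_left_mono) auto
    then show ?thesis using del1 by (simp add: b_def v1_def)
  qed
  have Tc1: "1 / v1 \<le> Tc" using Tc by (simp add: v1_def)
  have sr_le: "sr \<le> 1" "sa * sr \<le> 1" using sa1 sr1 by (auto simp: mult_le_one)

  define w where "w y = gauss d v0 (\<lambda>j. x j - sa * sr * y j)" for y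
  define Z where "Z = qq d \<mu> v0 (sa * sr) x"
  have Zw: "Z = (\<integral>y. w y \<partial>\<mu>)" by (simp add: Z_def qq_def w_def)
  have Z0: "0 < Z" unfolding Z_def by (rule qq_pos[OF P sets v00])
  have wpos: "0 < w y" for y by (simp add: w_def gauss_pos[OF v00])
  define B0 where "B0 = (2 * pi * v0) powr (- real d / 2)"
  have wle: "w y \<le> B0" for y unfolding w_def B0_def by (rule gauss_le[OF v00])
  have intw: "integrable \<mu> w" unfolding w_def by (rule integrable_gauss[OF P sets v00])
  have wmeas: "w \<in> borel_measurable \<mu>" unfolding w_def by (rule meas_gauss[OF sets])
  have intwy: "integrable \<mu> (\<lambda>y. w y * y i)" if i: "i < d" for i
  proof (rule integrable_const_bound[where B="B0 * R"])
    show "AE y in \<mu>. norm (w y * y i) \<le> B0 * R"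
      using supp
    proof eventually_elim
      case (elim y)
      then have "\<bar>y i\<bar> \<le> R" using coord_le_vnorm[OF i, of y] by simp
      then have "\<bar>w y\<bar> * \<bar>y i\<bar> \<le> B0 * R" using wpos[of y] wle[of y] by (intro mult_mono) auto
      then show ?case by (simp add: abs_mult)
    qed
    show "(\<lambda>y. w y * y i) \<in> borel_measurable \<mu>"
      using wmeas meas_coord[OF sets i] by (rule borel_measurable_times)
  qed
  define yb where "yb i = (\<integral>y. w y * y i \<partial>\<mu>) / Z" for i
  have sc_eq: "sc i = - (x i - sa * sr * yb i) / v0" if i: "i < d" for i
  proof -
    have "sc i = deriv (\<lambda>h. ln (qq d \<mu> v0 (sa * sr) (x(i := x i + h)))) 0"
      using sc[OF i] by (simp add: sab v0_def)
    also have "\<dots> = (\<integral>y. w y * (- (x i - sa * sr * y i) / v0) \<partial>\<mu>) / Z"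
      unfolding w_def Z_def by (rule score_eq[OF P sets v00 i])
    also have "(\<integral>y. w y * (- (x i - sa * sr * y i) / v0) \<partial>\<mu>) = (\<integral>y. (- x i / v0) * w y + (sa * sr / v0) * (w y * y i) \<partial>\<mu>)"
      by (rule Bochner_Integration.integral_cong[OF refl]) (use v00 in \<open>simp add: field_simps\<close>)
    also have "\<dots> = (- x i / v0) * Z + (sa * sr / v0) * (\<integral>y. w y * y i \<partial>\<mu>)"
      using intw intwy[OF i] by (simp add: Zw)
    finally show ?thesis using Z0 v00 by (simp add: yb_def field_simps)
  qed
  have ybR: "vnorm d yb \<le> R"
  proof -
    have fe: "(\<lambda>y. w y * (\<Sum>i<d. yb i * y i)) = (\<lambda>y. \<Sum>i<d. yb i * (w y * y i))"
      by (simp add: sum_distrib_left algebra_simps)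
    have intS: "integrable \<mu> (\<lambda>y. w y * (\<Sum>i<d. yb i * y i))"
      unfolding fe by (rule Bochner_Integration.integrable_sum) (auto intro!: intwy)
    have "(vnorm d yb)\<^sup>2 = (\<Sum>i<d. yb i * yb i)" unfolding vnorm_sq by (simp add: power2_eq_square)
    also have "\<dots> = (\<Sum>i<d. yb i * (\<integral>y. w y * y i \<partial>\<mu>)) / Z" by (simp add: yb_def sum_divide_distrib)
    also have "(\<Sum>i<d. yb i * (\<integral>y. w y * y i \<partial>\<mu>)) = (\<integral>y. w y * (\<Sum>i<d. yb i * y i) \<partial>\<mu>)"
    proof -
      have "(\<Sum>i<d. yb i * (\<integral>y. w y * y i \<partial>\<mu>)) = (\<Sum>i<d. (\<integral>y. yb i * (w y * y i) \<partial>\<mu>))" by simp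
      also have "\<dots> = (\<integral>y. (\<Sum>i<d. yb i * (w y * y i)) \<partial>\<mu>)"
        by (rule Bochner_Integration.integral_sum[symmetric]) (auto intro!: intwy)
      finally show ?thesis by (simp add: fe)
    qed
    also have "(\<integral>y. w y * (\<Sum>i<d. yb i * y i) \<partial>\<mu>) \<le> (\<integral>y. (vnorm d yb * R) * w y \<partial>\<mu>)"
    proof (rule integral_mono_AE[OF intS])
      show "integrable \<mu> (\<lambda>y. (vnorm d yb * R) * w y)" using intw by simp
      show "AE y in \<mu>. w y * (\<Sum>i<d. yb i * y i) \<le> (vnorm d yb * R) * w y"
        using supp
      proof eventually_elim
        case (elim y)
        have "(\<Sum>i<d. yb i * y i) \<le> vnorm d yb * vnorm d y" using vnorm_cs[where d=d and x=yb and y=y] by simp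
        also have "\<dots> \<le> vnorm d yb * R" using elim vnorm_nonneg[of d yb] by (intro mult_left_mono) auto
        finally show ?case using wpos[of y] by (simp add: mult.commute mult_left_mono less_imp_le)
      qed
    qed
    also have "(\<integral>y. (vnorm d yb * R) * w y \<partial>\<mu>) = vnorm d yb * R * Z" by (simp add: Zw)
    finally have "(vnorm d yb)\<^sup>2 \<le> vnorm d yb * R * Z / Z" using Z0 by (simp add: divide_right_mono)
    then have sq: "vnorm d yb * vnorm d yb \<le> vnorm d yb * R" using Z0 by (simp add: power2_eq_square)
    show ?thesis
    proof (cases "vnorm d yb = 0")
      case True then show ?thesis using R3 by simp
    next
      case False
      then have "0 < vnorm d yb" using vnorm_nonneg[of d yb] by simp
      then show ?thesis using sq by simp
    qed
  qed

  define mf where "mf y = (\<lambda>i. (sa * (1 - sr\<^sup>2) * x i + sr * (1 - sa\<^sup>2) * y i) / (1 - sa\<^sup>2 * sr\<^sup>2))" for y :: "nat \<Rightarrow> real"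
  define Nf where "Nf m = gauss d V (\<lambda>i. xp i - m i)" for m :: "nat \<Rightarrow> real"
  define mb where "mb = mf yb"
  have wN: "(\<lambda>y. w y * Nf (mf y)) = (\<lambda>y. gauss d (1 - sr\<^sup>2) (\<lambda>i. xp i - sr * y i) * gauss d (1 - sa\<^sup>2) (\<lambda>i. x i - sa * xp i))"
  proof
    fix y
    show "w y * Nf (mf y) = gauss d (1 - sr\<^sup>2) (\<lambda>i. xp i - sr * y i) * gauss d (1 - sa\<^sup>2) (\<lambda>i. x i - sa * xp i)"
      unfolding w_def Nf_def mf_def V' v0sq by (rule gauss_prod[OF sa1 sr1, symmetric])
  qed
  have intwN: "integrable \<mu> (\<lambda>y. w y * Nf (mf y))"
    unfolding wN by (intro integrable_mult_left integrable_gauss[OF P sets]) (use sq_lt1[OF sr1] in simp)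
  have pc: "qq d \<mu> (1 - r) (sqrt r) xp * gauss d (1 - a) (\<lambda>i. x i - sqrt a * xp i) = (\<integral>y. w y * Nf (mf y) \<partial>\<mu>)"
    unfolding wN qq_def sr_def[symmetric] sa_def[symmetric] unfolding rsq asq by simp
  have e2: "vnorm d (\<lambda>i. sqrt a * xp i - x i - (1 - a) * sc i) = sa * vnorm d (\<lambda>i. xp i - mb i)"
  proof -
    have "vnorm d (\<lambda>i. sqrt a * xp i - x i - (1 - a) * sc i) = vnorm d (\<lambda>i. sa * (xp i - mb i))"
    proof (rule vnorm_cong)
      fix i assume i: "i < d"
      have v0ne: "1 - sa\<^sup>2 * sr\<^sup>2 \<noteq> 0" using v00 v0sq by simp
      show "sqrt a * xp i - x i - (1 - a) * sc i = sa * (xp i - mb i)"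
        unfolding sc_eq[OF i] mb_def mf_def sa_def[symmetric] v0sq
        using v0ne by (simp add: asq field_simps power2_eq_square)
    qed
    then show ?thesis using sa1 by (simp add: vnorm_scale)
  qed
  have ps: "(a / (2 * pi * sig)) powr (real d / 2) *
              exp (- (vnorm d (\<lambda>i. sqrt a * xp i - x i - (1 - a) * sc i))\<^sup>2 / (2 * sig)) = Nf mb"
  proof -
    have e1: "(a / (2 * pi * sig)) powr (real d / 2) = (2 * pi * V) powr (- real d / 2)"
    proof -
      have "a / (2 * pi * sig) = 1 / (2 * pi * V)" using a0 by (simp add: sigV)
      then show ?thesis using V0 by (simp add: powr_divide powr_minus_divide)
    qed
    have e3: "- (sa * vnorm d (\<lambda>i. xp i - mb i))\<^sup>2 / (2 * sig) = - (vnorm d (\<lambda>i. xp i - mb i))\<^sup>2 / (2 * V)"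
      using a0 V0 by (simp add: power_mult_distrib asq[symmetric] sigV)
    show ?thesis unfolding e2 e3 e1 Nf_def gauss_def by (rule refl)
  qed

  have v0ne: "1 - sa\<^sup>2 * sr\<^sup>2 \<noteq> 0" using v00 v0sq by simp
  define Dn where "Dn = vnorm d (\<lambda>i. xp i - mb i)"
  define k where "k = sr * b / v0"
  define M where "M = 2 * R * (sr / v1) * Dn + 2 * R\<^sup>2 * (sr / v1) * k"
  have Dn0: "0 \<le> Dn" by (simp add: Dn_def vnorm_nonneg)
  have k0: "0 \<le> k" using sr1 b0 v00 by (simp add: k_def)
  have kV: "k / V = sr / v1" using b0 v00 v10 by (simp add: k_def V_def field_simps)
  have mfk: "mf y i - mb i = k * (y i - yb i)" for y i
    unfolding mb_def mf_def k_def bsq v0sq by (rule lin_helper)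
  have ptw: "exp (- M) * Nf mb \<le> Nf (mf y) \<and> Nf (mf y) \<le> exp M * Nf mb" if y: "vnorm d y \<le> R" for y
  proof -
    define Ep where "Ep = vnorm d (\<lambda>i. xp i - mf y i)"
    define En where "En = vnorm d (\<lambda>i. mf y i - mb i)"
    have Ep0: "0 \<le> Ep" "0 \<le> En" by (simp_all add: Ep_def En_def vnorm_nonneg)
    have En_le: "En \<le> k * (2 * R)"
    proof -
      have "En = k * vnorm d (\<lambda>i. y i - yb i)" unfolding En_def mfk using k0 by (simp add: vnorm_scale)
      also have "\<dots> \<le> k * (2 * R)" using vnorm_diff[of d y yb] y ybR k0 by (intro mult_left_mono) auto
      finally show ?thesis .
    qed
    have t1: "Ep \<le> Dn + En"
    proof -
      have "Ep = vnorm d (\<lambda>i. (xp i - mb i) - (mf y i - mb i))" unfolding Ep_def by simp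
      also have "\<dots> \<le> Dn + En" unfolding Dn_def En_def by (rule vnorm_diff)
      finally show ?thesis .
    qed
    have t2: "Dn \<le> Ep + En"
    proof -
      have "Dn = vnorm d (\<lambda>i. (xp i - mf y i) + (mf y i - mb i))" unfolding Dn_def by simp
      also have "\<dots> \<le> Ep + En" unfolding Ep_def En_def by (rule vnorm_triangle)
      finally show ?thesis .
    qed
    have "Dn\<^sup>2 - Ep\<^sup>2 = (Dn - Ep) * (Dn + Ep)" by (simp add: power2_eq_square algebra_simps)
    then have "\<bar>Dn\<^sup>2 - Ep\<^sup>2\<bar> = \<bar>Dn - Ep\<bar> * (Dn + Ep)" using Dn0 Ep0 by (simp add: abs_mult)
    also have "\<dots> \<le> En * (2 * Dn + En)" using t1 t2 Dn0 Ep0 by (intro mult_mono) auto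
    also have "\<dots> \<le> (k * (2 * R)) * (2 * Dn + k * (2 * R))" using En_le Dn0 Ep0 k0 R3 by (intro mult_mono add_left_mono) auto
    also have "\<dots> = 2 * V * M" unfolding M_def kV[symmetric] using V0 by (simp add: field_simps power2_eq_square)
    finally have bd: "\<bar>Dn\<^sup>2 - Ep\<^sup>2\<bar> \<le> 2 * V * M" .
    then have bd2: "\<bar>(Dn\<^sup>2 - Ep\<^sup>2) / (2 * V)\<bar> \<le> M" using V0 by (simp add: abs_divide pos_divide_le_eq mult.commute)
    have eq: "Nf (mf y) = Nf mb * exp ((Dn\<^sup>2 - Ep\<^sup>2) / (2 * V))"
      unfolding Nf_def gauss_def Dn_def Ep_def mult.assoc exp_add[symmetric] using V0 by (simp add: field_simps)
    have Np: "0 < Nf mb" unfolding Nf_def by (rule gauss_pos[OF V0])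
    have "exp (- M) \<le> exp ((Dn\<^sup>2 - Ep\<^sup>2) / (2 * V))" "exp ((Dn\<^sup>2 - Ep\<^sup>2) / (2 * V)) \<le> exp M"
      using bd2 unfolding abs_le_iff exp_le_cancel_iff by linarith+
    then show ?thesis unfolding eq using Np by (auto simp: mult.commute intro: mult_left_mono)
  qed
  define I where "I = (\<integral>y. w y * Nf (mf y) \<partial>\<mu>)"
  have lower: "exp (- M) * Nf mb * Z \<le> I"
  proof -
    have "exp (- M) * Nf mb * Z = (\<integral>y. (exp (- M) * Nf mb) * w y \<partial>\<mu>)" by (simp add: Zw)
    also have "\<dots> \<le> I" unfolding I_def
    proof (rule integral_mono_AE)
      show "integrable \<mu> (\<lambda>y. (exp (- M) * Nf mb) * w y)" using intw by simp
      show "integrable \<mu> (\<lambda>y. w y * Nf (mf y))" by (rule intwN)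
      show "AE y in \<mu>. (exp (- M) * Nf mb) * w y \<le> w y * Nf (mf y)" using supp
      proof eventually_elim
        case (elim y)
        have "w y * (exp (- M) * Nf mb) \<le> w y * Nf (mf y)"
          by (rule mult_left_mono) (use ptw[OF elim] wpos[of y] in auto)
        then show ?case by (simp add: ac_simps)
      qed
    qed
    finally show ?thesis .
  qed
  have upper: "I \<le> exp M * Nf mb * Z"
  proof -
    have "I \<le> (\<integral>y. (exp M * Nf mb) * w y \<partial>\<mu>)" unfolding I_def
    proof (rule integral_mono_AE)
      show "integrable \<mu> (\<lambda>y. (exp M * Nf mb) * w y)" using intw by simp
      show "integrable \<mu> (\<lambda>y. w y * Nf (mf y))" by (rule intwN)
      show "AE y in \<mu>. w y * Nf (mf y) \<le> (exp M * Nf mb) * w y" using supp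
      proof eventually_elim
        case (elim y)
        have "w y * Nf (mf y) \<le> w y * (exp M * Nf mb)"
          by (rule mult_left_mono) (use ptw[OF elim] wpos[of y] in auto)
        then show ?case by (simp add: ac_simps)
      qed
    qed
    also have "\<dots> = exp M * Nf mb * Z" by (simp add: Zw)
    finally show ?thesis .
  qed
  have Np: "0 < Nf mb" unfolding Nf_def by (rule gauss_pos[OF V0])
  define rho where "rho = I / Z / Nf mb"
  have rho_eq: "rho = I / (Nf mb * Z)" by (simp add: rho_def)
  have pos2: "0 < Nf mb * Z" using Np Z0 by simp
  have rl: "exp (- M) \<le> rho" unfolding rho_eq using lower pos2 by (simp add: pos_le_divide_eq mult.commute mult.left_commute)
  have ru: "rho \<le> exp M" unfolding rho_eq using upper pos2 by (simp add: pos_divide_le_eq mult.commute mult.left_commute)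
  have rpos: "0 < rho" using rl by (meson exp_gt_zero less_le_trans)
  have lnb: "\<bar>ln rho\<bar> \<le> M"
  proof -
    have "- M \<le> ln rho" using rl rpos by (metis ln_exp ln_le_cancel_iff exp_gt_zero)
    moreover have "ln rho \<le> M" using ru rpos by (metis ln_exp ln_le_cancel_iff exp_gt_zero)
    ultimately show ?thesis by simp
  qed
  have lhs: "qq d \<mu> (1 - r) (sqrt r) xp * gauss d (1 - a) (\<lambda>i. x i - sqrt a * xp i) / qq d \<mu> (1 - ab) (sqrt ab) x
           / ((a / (2 * pi * sig)) powr (real d / 2) *
              exp (- (vnorm d (\<lambda>i. sqrt a * xp i - x i - (1 - a) * sc i))\<^sup>2 / (2 * sig))) = rho"
    unfolding ps pc rho_def I_def Z_def sab v0_def ..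
  define A where "A = vnorm d (\<lambda>i. sqrt a * xp i - x i)"
  define X where "X = vnorm d x"
  have A0: "0 \<le> A" "0 \<le> X" by (simp_all add: A_def X_def vnorm_nonneg)
  have saDn: "sa * Dn \<le> A + del * (X + R)"
  proof -
    have "sa * Dn = vnorm d (\<lambda>i. (sqrt a * xp i - x i) - (1 - a) * sc i)" using e2 by (simp add: Dn_def)
    also have "\<dots> \<le> A + vnorm d (\<lambda>i. (1 - a) * sc i)" unfolding A_def by (rule vnorm_diff)
    also have "vnorm d (\<lambda>i. (1 - a) * sc i) = (b / v0) * vnorm d (\<lambda>i. x i - sa * sr * yb i)"
    proof -
      have "vnorm d (\<lambda>i. (1 - a) * sc i) = vnorm d (\<lambda>i. (- (b / v0)) * (x i - sa * sr * yb i))"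
        by (rule vnorm_cong) (use v00 in \<open>simp add: sc_eq b_def field_simps\<close>)
      also have "\<dots> = \<bar>- (b / v0)\<bar> * vnorm d (\<lambda>i. x i - sa * sr * yb i)" by (rule vnorm_scale)
      also have "\<bar>- (b / v0)\<bar> = b / v0" using b0 v00 by simp
      finally show ?thesis .
    qed
    also have "(b / v0) * vnorm d (\<lambda>i. x i - sa * sr * yb i) \<le> del * (X + R)"
    proof -
      have "vnorm d (\<lambda>i. x i - sa * sr * yb i) \<le> X + vnorm d (\<lambda>i. (sa * sr) * yb i)"
        unfolding X_def by (rule vnorm_diff)
      also have "vnorm d (\<lambda>i. (sa * sr) * yb i) = (sa * sr) * vnorm d yb"
        using sa1 sr1 by (simp add: vnorm_scale)
      also have "(sa * sr) * vnorm d yb \<le> 1 * R" using sr_le(2) ybR vnorm_nonneg[of d yb] sa1 sr1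
        by (intro mult_mono) auto
      finally have "vnorm d (\<lambda>i. x i - sa * sr * yb i) \<le> X + R" by simp
      then show ?thesis using bv0 b0 v00 del0 vnorm_nonneg[of d "\<lambda>i. x i - sa * sr * yb i"]
        by (intro mult_mono) auto
    qed
    finally show ?thesis by simp
  qed
  have Dnb: "2 * Dn \<le> 3 * (A + del * (X + R))"
  proof -
    have "(2/3) * Dn \<le> sa * Dn" by (rule mult_right_mono) (use sa23 Dn0 in auto)
    then show ?thesis using saDn by simp
  qed
  have Tc0: "0 \<le> Tc" using Tc1 v10 by (smt (verit) divide_pos_pos)
  have f1: "sr / v1 \<le> Tc"
  proof -
    have "sr / v1 \<le> 1 / v1" using sr_le(1) v10 by (intro divide_right_mono) auto
    then show ?thesis using Tc1 by simp
  qed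
  have f2: "k \<le> del"
  proof -
    have "k \<le> 1 * b / v0" unfolding k_def using sr_le(1) b0 v00 by (intro divide_right_mono mult_right_mono) auto
    then show ?thesis using bv0 by simp
  qed
  have R0: "0 \<le> R" using R3 by simp
  have m1: "(sr / v1) * (2 * R * Dn) \<le> Tc * (2 * R * Dn)" by (rule mult_right_mono) (use f1 R0 Dn0 in auto)
  have m2: "(sr / v1) * k \<le> Tc * del" by (rule mult_mono) (use f1 f2 Tc0 k0 in auto)
  have m3: "2 * R * Dn \<le> 3 * R * (A + del * X + del * R)"
  proof -
    have "R * (2 * Dn) \<le> R * (3 * (A + del * (X + R)))" by (rule mult_left_mono) (use Dnb R0 in auto)
    then show ?thesis by (simp add: algebra_simps)
  qed
  have g1: "3 * R * A \<le> R * R * A" by (rule mult_right_mono, rule mult_right_mono) (use R3 A0 in auto)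
  have g2: "3 * R * del * X \<le> R * R * X"
  proof -
    have "3 * del * R \<le> R * R" by (rule mult_right_mono) (use R3 del2 in auto)
    then have "(3 * del * R) * X \<le> (R * R) * X" by (rule mult_right_mono) (use A0 in auto)
    then show ?thesis by (simp add: ac_simps)
  qed
  have g3: "5 * R * R * del \<le> R * R"
  proof -
    have "(R * R) * (5 * del) \<le> (R * R) * 1" by (rule mult_left_mono) (use del2 R0 in auto)
    then show ?thesis by (simp add: ac_simps)
  qed
  have "M = (sr / v1) * (2 * R * Dn) + 2 * R\<^sup>2 * ((sr / v1) * k)" by (simp add: M_def ac_simps)
  also have "\<dots> \<le> Tc * (2 * R * Dn) + 2 * R\<^sup>2 * (Tc * del)"
    using m1 m2 by (intro add_mono mult_left_mono) auto
  also have "\<dots> \<le> Tc * (3 * R * (A + del * X + del * R)) + 2 * R\<^sup>2 * (Tc * del)"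
    using m3 Tc0 by (intro add_mono mult_left_mono) auto
  also have "\<dots> = Tc * (3 * R * A + 3 * R * del * X + 5 * R * R * del)" by (simp add: algebra_simps power2_eq_square)
  also have "\<dots> \<le> Tc * (R * R * A + R * R * X + R * R)" using g1 g2 g3 Tc0 by (intro mult_left_mono) auto
  also have "\<dots> = Tc * R\<^sup>2 * (A + X + 1)" by (simp add: algebra_simps power2_eq_square)
  finally have Mb: "M \<le> Tc * R\<^sup>2 * (A + X + 1)" .
  show ?thesis unfolding lhs using lnb Mb A_def X_def by simp
qed



lemma ab_Suc: "alpha_bar c0 c1 T (Suc k) = alpha c0 c1 T (Suc k) * alpha_bar c0 c1 T k"
  unfolding alpha_bar_def by (rule prod.nat_ivl_Suc') simp

lemma params:
  fixes c0 c1 :: real and T t :: nat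
  assumes T: "2 \<le> T" and c0: "1 \<le> c0" and c1: "1 \<le> c1" and hb: "c1 * ln (real T) / real T \<le> 1/25" and t: "2 \<le> t"
  shows "4/9 \<le> alpha c0 c1 T t \<and> alpha c0 c1 T t < 1 \<and> 0 < alpha_bar c0 c1 T (t-1) \<and> alpha_bar c0 c1 T (t-1) < 1
       \<and> alpha_bar c0 c1 T t = alpha c0 c1 T t * alpha_bar c0 c1 T (t-1)
       \<and> 1 / (1 - alpha_bar c0 c1 T (t-1)) \<le> real T powr c0
       \<and> (1 - alpha c0 c1 T t) / (1 - alpha_bar c0 c1 T (t-1)) \<le> 1/5"
proof -
  define h where "h = c1 * ln (real T) / real T"
  define b1 where "b1 = real T powr (- c0)"
  define g where "g k = b1 * (1 + h) ^ (k - 1)" for k :: nat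
  define m where "m k = min (g k) 1" for k :: nat
  have T1: "1 < real T" using T by simp
  have h0: "0 < h" unfolding h_def using T1 c1 by (intro divide_pos_pos mult_pos_pos) auto
  have h1: "h \<le> 1/25" using hb by (simp add: h_def)
  have b10: "0 < b1" using T1 by (simp add: b1_def)
  have b11: "b1 < 1" unfolding b1_def by (rule powr_less_one) (use T1 c0 in auto)
  have beta1: "beta c0 c1 T 1 = b1" by (simp add: beta_def b1_def)
  have betak: "beta c0 c1 T k = h * m k" if "2 \<le> k" for k
    using that by (simp add: beta_def b1_def h_def m_def g_def)
  have g0: "0 < g k" for k using b10 h0 by (simp add: g_def)
  have m0: "0 < m k" "m k \<le> 1" for k using g0[of k] by (auto simp: m_def)
  have gS: "g (Suc k) = g k * (1 + h)" if "1 \<le> k" for k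
    using that by (cases k) (auto simp: g_def algebra_simps)
  have mS: "m k \<le> m (Suc k) \<and> m (Suc k) \<le> (1 + h) * m k" if "1 \<le> k" for k
  proof -
    have gg: "g k \<le> g k * (1 + h)" using g0[of k] h0 by simp
    have "g k \<le> g (Suc k)" using gS[OF that] gg by simp
    moreover have "min (g k * (1 + h)) 1 \<le> (1 + h) * min (g k) 1"
    proof (cases "g k \<le> 1")
      case True
      have "min (g k * (1 + h)) 1 \<le> g k * (1 + h)" by simp
      then show ?thesis using True by (simp add: mult.commute)
    next
      case False
      have "min (g k * (1 + h)) 1 \<le> 1" by simp
      also have "1 \<le> (1 + h) * 1" using h0 by simp
      finally show ?thesis using False by simp
    qed
    ultimately show ?thesis unfolding m_def gS[OF that] by (auto simp: min_def)
  qed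
  have beta_pos: "0 < beta c0 c1 T k \<and> beta c0 c1 T k < 1" if "1 \<le> k" for k
  proof (cases "k = 1")
    case True then show ?thesis using b10 b11 beta1 by simp
  next
    case False
    then have "2 \<le> k" using that by simp
    then have "beta c0 c1 T k = h * m k" by (rule betak)
    moreover have "h * m k \<le> h * 1" using m0[of k] h0 by (intro mult_left_mono) auto
    moreover have "0 < h * m k" using m0[of k] h0 by simp
    ultimately show ?thesis using h1 by linarith
  qed
  have al: "0 < alpha c0 c1 T k \<and> alpha c0 c1 T k < 1" if "1 \<le> k" for k
    using beta_pos[OF that] by (simp add: alpha_def)
  have abpos: "0 < alpha_bar c0 c1 T k" for k
    unfolding alpha_bar_def by (rule prod_pos) (use al in auto)
  have ab1: "alpha_bar c0 c1 T k \<le> alpha c0 c1 T 1" if "1 \<le> k" for k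
  proof -
    have "{1..k} = insert 1 {Suc 1..k}" using that by auto
    then have "alpha_bar c0 c1 T k = alpha c0 c1 T 1 * (\<Prod>i\<in>{Suc 1..k}. alpha c0 c1 T i)"
      unfolding alpha_bar_def by simp
    also have "\<dots> \<le> alpha c0 c1 T 1 * 1"
      using al[of 1] al by (intro mult_left_mono prod_le_1) (auto simp: less_imp_le)
    finally show ?thesis by simp
  qed
  have ind: "m k / 4 \<le> 1 - alpha_bar c0 c1 T k" if "1 \<le> k" for k
    using that
  proof (induction k rule: nat_induct_at_least)
    case base
    have "alpha_bar c0 c1 T 1 = 1 - b1" using beta1 by (simp add: alpha_bar_def alpha_def)
    moreover have "m 1 \<le> b1" by (simp add: m_def g_def)
    ultimately show ?case using b10 by simp
  next
    case (Suc k)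
    define u where "u = 1 - alpha_bar c0 c1 T k"
    define bb where "bb = beta c0 c1 T (Suc k)"
    have bb: "bb = h * m (Suc k)" unfolding bb_def by (rule betak) (use Suc in simp)
    have u1: "u \<le> 1" using abpos[of k] by (simp add: u_def)
    have bb0: "0 \<le> bb" unfolding bb using h0 m0(1)[of "Suc k"] by simp
    have new: "1 - alpha_bar c0 c1 T (Suc k) = u + bb * (1 - u)"
      by (simp add: ab_Suc alpha_def u_def bb_def algebra_simps)
    show ?case
    proof (cases "1/4 \<le> u")
      case True
      have "m (Suc k) / 4 \<le> 1/4" using m0[of "Suc k"] by simp
      moreover have "0 \<le> bb * (1 - u)" using bb0 u1 by simp
      ultimately show ?thesis unfolding new using True by linarith
    next
      case False
      have "bb * (3/4) \<le> bb * (1 - u)" using False bb0 by (intro mult_left_mono) auto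
      moreover have "m (Suc k) / 4 \<le> m k / 4 + h * m (Suc k) / 4"
      proof -
        have "m (Suc k) \<le> m k + h * m k" using mS[OF Suc.hyps] by (simp add: algebra_simps)
        moreover have "h * m k \<le> h * m (Suc k)" using mS[OF Suc.hyps] h0 by (intro mult_left_mono) auto
        ultimately show ?thesis by simp
      qed
      moreover have "0 \<le> h * m (Suc k)" using h0 m0[of "Suc k"] by simp
      ultimately show ?thesis unfolding new using Suc.IH bb by (simp add: u_def) 
    qed
  qed
  have t1: "1 \<le> t - 1" using t by simp
  have tS: "t = Suc (t - 1)" using t by simp
  have r01: "0 < alpha_bar c0 c1 T (t-1)" "alpha_bar c0 c1 T (t-1) < 1"
    using abpos[of "t-1"] ab1[OF t1] al[of 1] by auto
  have abt: "alpha_bar c0 c1 T t = alpha c0 c1 T t * alpha_bar c0 c1 T (t-1)"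
    using ab_Suc[of c0 c1 T "t-1"] tS by simp
  have bt: "beta c0 c1 T t = h * m t" by (rule betak[OF t])
  have a49: "4/9 \<le> alpha c0 c1 T t"
  proof -
    have "h * m t \<le> h * 1" using m0[of t] h0 by (intro mult_left_mono) auto
    then show ?thesis using bt h1 by (simp add: alpha_def)
  qed
  have a1: "alpha c0 c1 T t < 1" using al[of t] t by simp
  have Tc: "1 / (1 - alpha_bar c0 c1 T (t-1)) \<le> real T powr c0"
  proof -
    have "b1 \<le> 1 - alpha_bar c0 c1 T (t-1)" using ab1[OF t1] beta1 by (simp add: alpha_def)
    then have "1 / (1 - alpha_bar c0 c1 T (t-1)) \<le> 1 / b1" using b10 by (intro divide_left_mono) auto
    also have "1 / b1 = real T powr c0" using T1 by (simp add: b1_def powr_minus_divide)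
    finally show ?thesis .
  qed
  have ratio: "(1 - alpha c0 c1 T t) / (1 - alpha_bar c0 c1 T (t-1)) \<le> 1/5"
  proof -
    define u where "u = 1 - alpha_bar c0 c1 T (t-1)"
    have u0: "0 < u" using r01 by (simp add: u_def)
    have ui: "m (t-1) / 4 \<le> u" using ind[OF t1] by (simp add: u_def)
    have mt: "m t \<le> (1 + h) * m (t-1)" using mS[OF t1] tS by simp
    have "1 - alpha c0 c1 T t = h * m t" using bt by (simp add: alpha_def)
    also have "\<dots> \<le> h * ((1 + h) * m (t-1))" using mt h0 by (intro mult_left_mono) auto
    also have "\<dots> \<le> h * ((1 + h) * (4 * u))" using ui h0 by (intro mult_left_mono) auto
    also have "\<dots> = (4 * h * (1 + h)) * u" by (simp add: algebra_simps)
    also have "\<dots> \<le> (1/5) * u"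
    proof (rule mult_right_mono)
      have "4 * h * (1 + h) \<le> 4 * (1/25) * (1 + 1/25)" using h0 h1 by (intro mult_mono) auto
      then show "4 * h * (1 + h) \<le> 1/5" by simp
    qed (use u0 in simp)
    finally have "1 - alpha c0 c1 T t \<le> 1/5 * u" .
    then show ?thesis using u0 unfolding u_def[symmetric] by (simp add: pos_divide_le_eq mult.commute)
  qed
  show ?thesis using a49 a1 r01 abt Tc ratio by simp
qed



lemma T0_exists:
  assumes cR: "cR > 0" and c1: "1 \<le> c1"
  shows "\<exists>T0::nat. \<forall>T\<ge>T0. 2 \<le> T \<and> c1 * ln (real T) / real T \<le> 1/25 \<and> 3 \<le> real T powr cR"
proof -
  have "((\<lambda>n. ln (real n) / real n) \<longlongrightarrow> 0) sequentially" by (rule lim_ln_over_n)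
  moreover have "(0::real) < 1 / (25 * c1)" using c1 by simp
  ultimately have "eventually (\<lambda>n. ln (real n) / real n < 1 / (25 * c1)) sequentially"
    by (rule order_tendstoD)
  then obtain N where N: "\<And>n. n \<ge> N \<Longrightarrow> ln (real n) / real n < 1 / (25 * c1)"
    by (auto simp: eventually_sequentially)
  define T0 where "T0 = max (max N 2) (nat \<lceil>3 powr (1 / cR)\<rceil>)"
  show ?thesis
  proof (intro exI allI impI conjI)
    fix T assume T: "T0 \<le> T"
    show "2 \<le> T" using T by (simp add: T0_def)
    have "ln (real T) / real T < 1 / (25 * c1)" using N T by (simp add: T0_def)
    then have "c1 * (ln (real T) / real T) \<le> c1 * (1 / (25 * c1))" using c1 by (intro mult_left_mono) auto
    then show "c1 * ln (real T) / real T \<le> 1/25" using c1 by simp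
    have "3 powr (1 / cR) \<le> real (nat \<lceil>3 powr (1 / cR)\<rceil>)" by (rule real_nat_ceiling_ge)
    also have "\<dots> \<le> real T"
    proof -
      have "nat \<lceil>3 powr (1 / cR)\<rceil> \<le> T0" unfolding T0_def by (rule max.cobounded2)
      then have "nat \<lceil>3 powr (1 / cR)\<rceil> \<le> T" using T by (rule le_trans)
      then show ?thesis by (simp only: of_nat_le_iff)
    qed
    finally have "(3 powr (1 / cR)) powr cR \<le> real T powr cR" by (intro powr_mono2) (use cR in auto)
    then show "3 \<le> real T powr cR" using cR by (simp add: powr_powr)
  qed
qed

lemma q_qq: "q d \<mu> c0 c1 T t x = qq d \<mu> (1 - alpha_bar c0 c1 T t) (sqrt (alpha_bar c0 c1 T t)) x"
  by (simp add: q_def qq_def)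

theorem lemma4:
  assumes cR: "cR > 0"
  shows "\<exists>C0 C1. \<forall>c0 \<ge> C0. \<forall>c1 \<ge> C1. \<exists>T0::nat. \<forall>T \<ge> T0. \<forall>(d::nat) (\<mu>::(nat \<Rightarrow> real) measure).
     T \<ge> 2 \<longrightarrow> d \<ge> 1 \<longrightarrow> prob_space \<mu> \<longrightarrow>
     sets \<mu> = sets (PiM {..<d} (\<lambda>_. borel)) \<longrightarrow>
     (AE y in \<mu>. vnorm d y \<le> real T powr cR) \<longrightarrow>
     (\<forall>t xt xp. 2 \<le> t \<and> t \<le> T \<longrightarrow>
        \<bar>ln (p_cond d \<mu> c0 c1 T t xp xt / p_star d \<mu> c0 c1 T t xp xt)\<bar>
        \<le> real T powr (c0 + 2 * cR) *
           (vnorm d (\<lambda>i. sqrt (alpha c0 c1 T t) * xp i - xt i) + vnorm d xt + 1))"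
proof (rule exI[of _ 1], rule exI[of _ 1], intro allI impI)
  fix c0 c1 :: real
  assume c0: "1 \<le> c0" and c1: "1 \<le> c1"
  obtain T0 where T0: "\<And>T. T \<ge> T0 \<Longrightarrow> 2 \<le> T \<and> c1 * ln (real T) / real T \<le> 1/25 \<and> 3 \<le> real T powr cR"
    using T0_exists[OF cR c1] by blast
  show "\<exists>T0::nat. \<forall>T \<ge> T0. \<forall>(d::nat) (\<mu>::(nat \<Rightarrow> real) measure).
     T \<ge> 2 \<longrightarrow> d \<ge> 1 \<longrightarrow> prob_space \<mu> \<longrightarrow>
     sets \<mu> = sets (PiM {..<d} (\<lambda>_. borel)) \<longrightarrow>
     (AE y in \<mu>. vnorm d y \<le> real T powr cR) \<longrightarrow>
     (\<forall>t xt xp. 2 \<le> t \<and> t \<le> T \<longrightarrow>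
        \<bar>ln (p_cond d \<mu> c0 c1 T t xp xt / p_star d \<mu> c0 c1 T t xp xt)\<bar>
        \<le> real T powr (c0 + 2 * cR) *
           (vnorm d (\<lambda>i. sqrt (alpha c0 c1 T t) * xp i - xt i) + vnorm d xt + 1))"
  proof (rule exI[of _ T0], intro allI impI, elim conjE)
    fix T d t :: nat and \<mu> :: "(nat \<Rightarrow> real) measure" and xt xp :: "nat \<Rightarrow> real"
    assume TT0: "T0 \<le> T" and T2: "2 \<le> T" and d1: "1 \<le> d" and P: "prob_space \<mu>"
      and sets: "sets \<mu> = sets (PiM {..<d} (\<lambda>_. borel))"
      and supp: "AE y in \<mu>. vnorm d y \<le> real T powr cR" and t2: "2 \<le> t" and tT: "t \<le> T"
    have TP: "2 \<le> T" "c1 * ln (real T) / real T \<le> 1/25" "3 \<le> real T powr cR" using T0[OF TT0] by auto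
    have pr: "4/9 \<le> alpha c0 c1 T t \<and> alpha c0 c1 T t < 1 \<and> 0 < alpha_bar c0 c1 T (t-1) \<and> alpha_bar c0 c1 T (t-1) < 1
       \<and> alpha_bar c0 c1 T t = alpha c0 c1 T t * alpha_bar c0 c1 T (t-1)
       \<and> 1 / (1 - alpha_bar c0 c1 T (t-1)) \<le> real T powr c0
       \<and> (1 - alpha c0 c1 T t) / (1 - alpha_bar c0 c1 T (t-1)) \<le> 1/5"
      by (rule params[OF TP(1) c0 c1 TP(2) t2])
    have main: "\<bar>ln (qq d \<mu> (1 - alpha_bar c0 c1 T (t-1)) (sqrt (alpha_bar c0 c1 T (t-1))) xp
             * gauss d (1 - alpha c0 c1 T t) (\<lambda>i. xt i - sqrt (alpha c0 c1 T t) * xp i)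
             / qq d \<mu> (1 - alpha_bar c0 c1 T t) (sqrt (alpha_bar c0 c1 T t)) xt
           / ((alpha c0 c1 T t / (2 * pi * sigma_sq c0 c1 T t)) powr (real d / 2) *
              exp (- (vnorm d (\<lambda>i. sqrt (alpha c0 c1 T t) * xp i - xt i - (1 - alpha c0 c1 T t) * score d \<mu> c0 c1 T t xt i))\<^sup>2
                / (2 * sigma_sq c0 c1 T t))))\<bar>
         \<le> real T powr c0 * (real T powr cR)\<^sup>2 * (vnorm d (\<lambda>i. sqrt (alpha c0 c1 T t) * xp i - xt i) + vnorm d xt + 1)"
    proof (rule main_generic[OF P sets supp])
      show "4/9 \<le> alpha c0 c1 T t" "alpha c0 c1 T t < 1" "0 < alpha_bar c0 c1 T (t-1)" "alpha_bar c0 c1 T (t-1) < 1"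
        "alpha_bar c0 c1 T t = alpha c0 c1 T t * alpha_bar c0 c1 T (t-1)"
        "1 / (1 - alpha_bar c0 c1 T (t-1)) \<le> real T powr c0"
        "(1 - alpha c0 c1 T t) / (1 - alpha_bar c0 c1 T (t-1)) \<le> 1/5"
        using pr by auto
      show "sigma_sq c0 c1 T t = (1 - alpha c0 c1 T t) * (alpha c0 c1 T t - alpha_bar c0 c1 T t) / (1 - alpha_bar c0 c1 T t)"
        by (simp add: sigma_sq_def)
      show "3 \<le> real T powr cR" by (rule TP(3))
      show "(1::real)/5 \<le> 1/5" by simp
      fix i assume "i < d"
      then show "score d \<mu> c0 c1 T t xt i = deriv (\<lambda>h. ln (qq d \<mu> (1 - alpha_bar c0 c1 T t) (sqrt (alpha_bar c0 c1 T t)) (xt(i := xt i + h)))) 0"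
        by (simp add: score_def q_qq)
    qed
    have pw: "real T powr (c0 + 2 * cR) = real T powr c0 * (real T powr cR)\<^sup>2"
    proof -
      have "c0 + 2 * cR = c0 + (cR + cR)" by simp
      then show ?thesis by (simp only: powr_add power2_eq_square)
    qed
    have eq: "p_cond d \<mu> c0 c1 T t xp xt / p_star d \<mu> c0 c1 T t xp xt =
         qq d \<mu> (1 - alpha_bar c0 c1 T (t-1)) (sqrt (alpha_bar c0 c1 T (t-1))) xp
             * gauss d (1 - alpha c0 c1 T t) (\<lambda>i. xt i - sqrt (alpha c0 c1 T t) * xp i)
             / qq d \<mu> (1 - alpha_bar c0 c1 T t) (sqrt (alpha_bar c0 c1 T t)) xt
           / ((alpha c0 c1 T t / (2 * pi * sigma_sq c0 c1 T t)) powr (real d / 2) *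
              exp (- (vnorm d (\<lambda>i. sqrt (alpha c0 c1 T t) * xp i - xt i - (1 - alpha c0 c1 T t) * score d \<mu> c0 c1 T t xt i))\<^sup>2
                / (2 * sigma_sq c0 c1 T t)))"
      by (simp only: p_cond_def p_star_def q_qq)
    show "\<bar>ln (p_cond d \<mu> c0 c1 T t xp xt / p_star d \<mu> c0 c1 T t xp xt)\<bar>
        \<le> real T powr (c0 + 2 * cR) *
           (vnorm d (\<lambda>i. sqrt (alpha c0 c1 T t) * xp i - xt i) + vnorm d xt + 1)"
      unfolding eq pw by (rule main)
  qed
qed

end
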